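(* Let $(R,\mathcal{T})$ and $(S,\widetilde{\mathcal{T}})$ be transverse CEERs on a compact, metrizable, zero-dimensional space $X$, and give $R\vee S$ the étale topology transferred from $R\times_XS$ via $((x,y),(y,z))\mapsto(x,z)$. Then: (i) if $(x,y)\in R$, then $\#([x]_S)=\#([y]_S)$; (ii) if $\mathcal{O}'$ is a groupoid partition of $R\vee S$ finer than the clopen partition $\{\Delta,\,R\setminus\Delta,\,S\setminus\Delta,\,(R\vee S)\setminus(R\cup S)\}$ (where $\Delta=\Delta_X$), then for every $U\in\mathcal{O}'$ there are unique elements $U_R,U_S,V_R,V_S\in\mathcal{O}'$ with $U_R,V_R\subset R$, $U_S,V_S\subset S$ and $U=U_R\cdot U_S=V_S\cdot V_R$; moreover $\mathcal{O}'\cap R=\{U\in\mathcal{O}':U\subset R\}$ and $\mathcal{O}'\cap S$ are groupoid partitions of $R$ and $S$, respectively.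
   Context: An étale equivalence relation on $X$ is a countable equivalence relation $R\subset X\times X$ with a locally compact, Hausdorff, second countable topology in which the product of composable pairs is continuous, the inverse is a homeomorphism, and $r(x,y)=x$ is a local homeomorphism; a CEER is a compact étale equivalence relation. $[x]_S$ is the $S$-class of $x$. $R\times_XS=\{((x,y),(y,z)):(x,y)\in R,(y,z)\in S\}$ with the relative product topology; $R$ and $S$ are transverse if $R\cap S=\Delta_X$ and there is a homeomorphism $h:R\times_XS\to S\times_XR$ with $r\circ h=r$, $s\circ h=s$ (where $r((x,y),(y,z))=x$, $s((x,y),(y,z))=z$); then $((x,y),(y,z))\mapsto(x,z)$ is a bijection onto the equivalence relation $R\vee S$ generated by $R$ and $S$. For subsets $U,V$ of an equivalence relation, $U\cdot V=\{(x,z):(x,y)\in U,(y,z)\in V\text{ for some }y\}$ and $U^{-1}=\{(y,x):(x,y)\in U\}$. A groupoid partition of a CEER $R$ is a finite clopen partition $\mathcal{O}'$ of $R$ such that: $\mathcal{O}'$ is finer than $\{\Delta,R\setminus\Delta\}$; for each $U\in\mathcal{O}'$ the maps $r,s$ restricted to $U$ are homeomorphisms onto their images, and if $U\subset R\setminus\Delta$ then $r(U)\cap s(U)=\emptyset$; for all $U,V\in\mathcal{O}'$ either $U\cdot V=\emptyset$ or $U\cdot V\in\mathcal{O}'$; and $U^{-1}\in\mathcal{O}'$ for every $U\in\mathcal{O}'$. *)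

theory Defs
  imports "HOL-Analysis.Analysis"
begin

definition diag :: "'a topology \<Rightarrow> ('a \<times> 'a) set" where
  "diag X = Id_on (topspace X)"

definition fibprod :: "('a \<times> 'a) set \<Rightarrow> ('a \<times> 'a) set \<Rightarrow> (('a \<times> 'a) \<times> ('a \<times> 'a)) set" where
  "fibprod R S = {(p, q). p \<in> R \<and> q \<in> S \<and> snd p = fst q}"

definition fibprod_top :: "('a \<times> 'a) topology \<Rightarrow> ('a \<times> 'a) topology
    \<Rightarrow> (('a \<times> 'a) \<times> ('a \<times> 'a)) topology" where
  "fibprod_top TR TS = subtopology (prod_topology TR TS) (fibprod (topspace TR) (topspace TS))"

definition compose_map :: "('a \<times> 'a) \<times> ('a \<times> 'a) \<Rightarrow> 'a \<times> 'a" where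
  "compose_map pq = (fst (fst pq), snd (snd pq))"

definition local_homeomorphism :: "'b topology \<Rightarrow> 'c topology \<Rightarrow> ('b \<Rightarrow> 'c) \<Rightarrow> bool" where
  "local_homeomorphism T X f \<longleftrightarrow>
     (\<forall>p \<in> topspace T. \<exists>U. openin T U \<and> p \<in> U \<and> openin X (f ` U) \<and>
        homeomorphic_map (subtopology T U) (subtopology X (f ` U)) f)"

definition etale_eqrel :: "'a topology \<Rightarrow> ('a \<times> 'a) set \<Rightarrow> ('a \<times> 'a) topology \<Rightarrow> bool" where
  "etale_eqrel X R T \<longleftrightarrow>
     equiv (topspace X) R \<and> (\<forall>x \<in> topspace X. countable (R `` {x})) \<and>
     topspace T = R \<and> locally_compact_space T \<and> Hausdorff_space T \<and> second_countable T \<and>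
     continuous_map (fibprod_top T T) T compose_map \<and>
     homeomorphic_map T T (\<lambda>(x, y). (y, x)) \<and>
     local_homeomorphism T X fst"

definition CEER :: "'a topology \<Rightarrow> ('a \<times> 'a) set \<Rightarrow> ('a \<times> 'a) topology \<Rightarrow> bool" where
  "CEER X R T \<longleftrightarrow> etale_eqrel X R T \<and> compact_space T"

definition transverse :: "'a topology \<Rightarrow> ('a \<times> 'a) set \<Rightarrow> ('a \<times> 'a) topology
    \<Rightarrow> ('a \<times> 'a) set \<Rightarrow> ('a \<times> 'a) topology \<Rightarrow> bool" where
  "transverse X R TR S TS \<longleftrightarrow> R \<inter> S = diag X \<and>
     (\<exists>h. homeomorphic_map (fibprod_top TR TS) (fibprod_top TS TR) h \<and>
          (\<forall>pq \<in> fibprod R S. fst (fst (h pq)) = fst (fst pq) \<and> snd (snd (h pq)) = snd (snd pq)))"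

definition join_rel :: "'a topology \<Rightarrow> ('a \<times> 'a) set \<Rightarrow> ('a \<times> 'a) set \<Rightarrow> ('a \<times> 'a) set" where
  "join_rel X R S = \<Inter>{E. equiv (topspace X) E \<and> R \<union> S \<subseteq> E}"

definition join_top :: "'a topology \<Rightarrow> ('a \<times> 'a) set \<Rightarrow> ('a \<times> 'a) topology
    \<Rightarrow> ('a \<times> 'a) set \<Rightarrow> ('a \<times> 'a) topology \<Rightarrow> ('a \<times> 'a) topology" where
  "join_top X R TR S TS = topology (\<lambda>U. U \<subseteq> join_rel X R S \<and>
      openin (fibprod_top TR TS) {pq \<in> topspace (fibprod_top TR TS). compose_map pq \<in> U})"

definition groupoid_partition :: "'a topology \<Rightarrow> ('a \<times> 'a) set \<Rightarrow> ('a \<times> 'a) topology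
    \<Rightarrow> ('a \<times> 'a) set set \<Rightarrow> bool" where
  "groupoid_partition X R T P \<longleftrightarrow>
     finite P \<and> \<Union>P = R \<and> {} \<notin> P \<and>
     (\<forall>U \<in> P. \<forall>V \<in> P. U \<noteq> V \<longrightarrow> U \<inter> V = {}) \<and>
     (\<forall>U \<in> P. openin T U \<and> closedin T U) \<and>
     (\<forall>U \<in> P. U \<subseteq> diag X \<or> U \<subseteq> R - diag X) \<and>
     (\<forall>U \<in> P. homeomorphic_map (subtopology T U) (subtopology X (fst ` U)) fst \<and>
               homeomorphic_map (subtopology T U) (subtopology X (snd ` U)) snd) \<and>
     (\<forall>U \<in> P. U \<subseteq> R - diag X \<longrightarrow> fst ` U \<inter> snd ` U = {}) \<and>
     (\<forall>U \<in> P. \<forall>V \<in> P. U O V = {} \<or> U O V \<in> P) \<and>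
     (\<forall>U \<in> P. U\<inverse> \<in> P)"

end

theory Submission
  imports Defs
begin

lemma cont_local:
  assumes "\<And>x. x \<in> topspace X \<Longrightarrow> f x \<in> topspace Y"
  and "\<And>x. x \<in> topspace X \<Longrightarrow> \<exists>U. openin X U \<and> x \<in> U \<and> continuous_map (subtopology X U) Y f"
  shows "continuous_map X Y f"
  unfolding continuous_map
proof (intro conjI allI impI)
  show "f ` topspace X \<subseteq> topspace Y" using assms(1) by blast
next
  fix V assume V: "openin Y V"
  show "openin X {x \<in> topspace X. f x \<in> V}"
  proof (rule openin_subopen[THEN iffD2], rule ballI)
    fix x assume x: "x \<in> {x \<in> topspace X. f x \<in> V}"
    then obtain U where U: "openin X U" "x \<in> U" "continuous_map (subtopology X U) Y f"
      using assms(2) by blast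
    then have "openin (subtopology X U) {y \<in> topspace (subtopology X U). f y \<in> V}"
      using V by (simp add: continuous_map)
    then have "openin X {y \<in> topspace (subtopology X U). f y \<in> V}"
      using U(1) openin_trans_full by blast
    moreover have "{y \<in> topspace (subtopology X U). f y \<in> V} \<subseteq> {x \<in> topspace X. f x \<in> V}"
      by auto
    moreover have "x \<in> {y \<in> topspace (subtopology X U). f y \<in> V}" using x U by auto
    ultimately show "\<exists>T. openin X T \<and> x \<in> T \<and> T \<subseteq> {x \<in> topspace X. f x \<in> V}" by blast
  qed
qed

lemma etale_sub:
  assumes "etale_eqrel X R T"
  shows "R \<subseteq> topspace X \<times> topspace X" "topspace T = R"
    "\<And>x. x \<in> topspace X \<Longrightarrow> (x,x) \<in> R" "sym R" "trans R"
  using assms unfolding etale_eqrel_def equiv_def refl_on_def by auto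

lemma etale_fst_cont:
  assumes "etale_eqrel X R T"
  shows "continuous_map T X fst"
proof (rule cont_local)
  fix p assume p: "p \<in> topspace T"
  then show "fst p \<in> topspace X" using etale_sub[OF assms] by auto
  from assms p obtain U where U: "openin T U" "p \<in> U" "openin X (fst ` U)"
      "homeomorphic_map (subtopology T U) (subtopology X (fst ` U)) fst"
    unfolding etale_eqrel_def local_homeomorphism_def by blast
  then show "\<exists>U. openin T U \<and> p \<in> U \<and> continuous_map (subtopology T U) X fst"
    by (meson continuous_map_into_fulltopology homeomorphic_imp_continuous_map)
qed

lemma etale_swap_cont:
  assumes "etale_eqrel X R T"
  shows "continuous_map T T (\<lambda>p. (snd p, fst p))"
proof -
  have "continuous_map T T (\<lambda>(x, y). (y, x))"
    using assms unfolding etale_eqrel_def by (simp add: homeomorphic_imp_continuous_map)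
  then show ?thesis by (simp add: case_prod_beta')
qed

lemma etale_snd_cont:
  assumes "etale_eqrel X R T"
  shows "continuous_map T X snd"
proof -
  have "continuous_map T X (fst \<circ> (\<lambda>p. (snd p, fst p)))"
    using continuous_map_compose etale_swap_cont[OF assms] etale_fst_cont[OF assms] by blast
  then show ?thesis by (simp add: o_def)
qed

lemma etale_eps_cont:
  assumes "etale_eqrel X R T"
  shows "continuous_map T T (\<lambda>p. (fst p, fst p))"
proof -
  have c1: "continuous_map T (fibprod_top T T) (\<lambda>p. (p, (snd p, fst p)))"
    unfolding fibprod_top_def continuous_map_in_subtopology
  proof
    show "continuous_map T (prod_topology T T) (\<lambda>p. (p, snd p, fst p))"
      using etale_swap_cont[OF assms] by (intro continuous_map_pairedI) auto
    show "(\<lambda>p. (p, snd p, fst p)) \<in> topspace T \<rightarrow> fibprod (topspace T) (topspace T)"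
      using etale_sub[OF assms] unfolding fibprod_def sym_def by auto
  qed
  have "continuous_map (fibprod_top T T) T compose_map"
    using assms unfolding etale_eqrel_def by blast
  then have "continuous_map T T (compose_map \<circ> (\<lambda>p. (p, (snd p, fst p))))"
    using c1 continuous_map_compose by blast
  then show ?thesis by (simp add: o_def compose_map_def)
qed

lemma etale_diag_open:
  assumes "etale_eqrel X R T"
  shows "openin T (diag X)"
proof (rule openin_subopen[THEN iffD2], rule ballI)
  fix d assume d: "d \<in> diag X"
  then obtain y where y: "d = (y,y)" "y \<in> topspace X" unfolding diag_def by auto
  then have dT: "d \<in> topspace T" using etale_sub[OF assms] by auto
  from assms dT obtain W where W: "openin T W" "d \<in> W" "openin X (fst ` W)"
      "homeomorphic_map (subtopology T W) (subtopology X (fst ` W)) fst"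
    unfolding etale_eqrel_def local_homeomorphism_def by blast
  have inj: "inj_on fst W"
    using homeomorphic_imp_injective_map[OF W(4)] openin_subset[OF W(1)]
    by (simp add: Int_absorb1)
  define W' where "W' = W \<inter> {p \<in> topspace T. (fst p, fst p) \<in> W}"
  have "openin T {p \<in> topspace T. (fst p, fst p) \<in> W}"
    using etale_eps_cont[OF assms] W(1) by (simp add: continuous_map)
  then have "openin T W'" unfolding W'_def using W(1) by blast
  moreover have "d \<in> W'" unfolding W'_def using W dT y by auto
  moreover have "W' \<subseteq> diag X"
  proof
    fix p assume p: "p \<in> W'"
    then have "p \<in> W" "(fst p, fst p) \<in> W" "p \<in> topspace T" unfolding W'_def by auto
    then have "p = (fst p, fst p)" using inj unfolding inj_on_def by auto
    moreover have "fst p \<in> topspace X" using \<open>p \<in> topspace T\<close> etale_sub[OF assms] by auto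
    ultimately show "p \<in> diag X" unfolding diag_def by (metis Id_onI)
  qed
  ultimately show "\<exists>T'. openin T T' \<and> d \<in> T' \<and> T' \<subseteq> diag X" by blast
qed

lemma etale_delta_cont:
  assumes "etale_eqrel X R T"
  shows "continuous_map X T (\<lambda>x. (x, x))"
proof (rule cont_local)
  fix y assume y: "y \<in> topspace X"
  then show "(y, y) \<in> topspace T" using etale_sub[OF assms] by auto
  then obtain W where W: "openin T W" "(y,y) \<in> W" "openin X (fst ` W)"
      "homeomorphic_map (subtopology T W) (subtopology X (fst ` W)) fst"
    using assms unfolding etale_eqrel_def local_homeomorphism_def by blast
  obtain g where g: "homeomorphic_maps (subtopology T W) (subtopology X (fst ` W)) fst g"
    using W(4) homeomorphic_map_maps by blast
  have gc: "continuous_map (subtopology X (fst ` W)) (subtopology T W) g"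
    and gi: "\<And>x. x \<in> topspace (subtopology X (fst ` W)) \<Longrightarrow> fst (g x) = x"
    using g unfolding homeomorphic_maps_def by auto
  have "continuous_map (subtopology X (fst ` W)) T ((\<lambda>p. (fst p, fst p)) \<circ> g)"
    using continuous_map_compose[OF continuous_map_into_fulltopology[OF gc] etale_eps_cont[OF assms]] .
  then have "continuous_map (subtopology X (fst ` W)) T (\<lambda>x. (x, x))"
    by (rule continuous_map_eq) (simp add: gi)
  then show "\<exists>U. openin X U \<and> y \<in> U \<and> continuous_map (subtopology X U) T (\<lambda>x. (x, x))"
  proof (intro exI conjI)
    show "openin X (fst ` W)" by (rule W(3))
    show "y \<in> fst ` W" using W(2) by (metis fst_conv image_eqI)
  qed assumption
qed

lemma fibtop_space:
  "topspace TR = R \<Longrightarrow> topspace TS = S \<Longrightarrow> topspace (fibprod_top TR TS) = fibprod R S"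
  unfolding fibprod_top_def fibprod_def by auto

lemma join_open_iff:
  "openin (join_top X R TR S TS) U \<longleftrightarrow> U \<subseteq> join_rel X R S \<and>
     openin (fibprod_top TR TS) {pq \<in> topspace (fibprod_top TR TS). compose_map pq \<in> U}"
proof -
  let ?F = "fibprod_top TR TS"
  have "istopology (\<lambda>U. U \<subseteq> join_rel X R S \<and> openin ?F {pq \<in> topspace ?F. compose_map pq \<in> U})"
    unfolding istopology_def
  proof (rule conjI; intro allI impI)
    fix A B assume A: "A \<subseteq> join_rel X R S \<and> openin ?F {pq \<in> topspace ?F. compose_map pq \<in> A}"
      and B: "B \<subseteq> join_rel X R S \<and> openin ?F {pq \<in> topspace ?F. compose_map pq \<in> B}"
    have eq: "{pq \<in> topspace ?F. compose_map pq \<in> A \<inter> B} =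
       {pq \<in> topspace ?F. compose_map pq \<in> A} \<inter> {pq \<in> topspace ?F. compose_map pq \<in> B}" by auto
    show "A \<inter> B \<subseteq> join_rel X R S \<and> openin ?F {pq \<in> topspace ?F. compose_map pq \<in> A \<inter> B}"
    proof (rule conjI)
      show "A \<inter> B \<subseteq> join_rel X R S" using A by blast
      show "openin ?F {pq \<in> topspace ?F. compose_map pq \<in> A \<inter> B}"
        unfolding eq by (rule openin_Int[OF conjunct2[OF A] conjunct2[OF B]])
    qed
  next
    fix K assume K: "\<forall>A\<in>K. A \<subseteq> join_rel X R S \<and> openin ?F {pq \<in> topspace ?F. compose_map pq \<in> A}"
    have eq: "{pq \<in> topspace ?F. compose_map pq \<in> \<Union>K} =
       \<Union>((\<lambda>A. {pq \<in> topspace ?F. compose_map pq \<in> A}) ` K)" by auto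
    have "openin ?F (\<Union>((\<lambda>A. {pq \<in> topspace ?F. compose_map pq \<in> A}) ` K))"
      using K by (intro openin_Union) auto
    show "\<Union>K \<subseteq> join_rel X R S \<and> openin ?F {pq \<in> topspace ?F. compose_map pq \<in> \<Union>K}"
    proof (rule conjI)
      show "\<Union>K \<subseteq> join_rel X R S" using K by blast
      show "openin ?F {pq \<in> topspace ?F. compose_map pq \<in> \<Union>K}"
        unfolding eq by fact
    qed
  qed
  then have "openin (join_top X R TR S TS) = (\<lambda>U. U \<subseteq> join_rel X R S \<and> openin ?F {pq \<in> topspace ?F. compose_map pq \<in> U})"
    unfolding join_top_def by (rule topology_inverse')
  then show ?thesis by (rule fun_cong)
qed

lemma preimg_R:
  fixes R S W :: "('a \<times> 'a) set"
  assumes fb: "\<And>p::'a\<times>'a. p \<in> R \<Longrightarrow> (p, (snd p, snd p)) \<in> fibprod R S"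
  shows "{p \<in> R. (p, (snd p, snd p)) \<in> {pq \<in> fibprod R S. compose_map pq \<in> W}} = W \<inter> R"
proof -
  have cm: "\<And>p::'a\<times>'a. compose_map (p, (snd p, snd p)) = p" by (simp add: compose_map_def)
  show ?thesis
    proof (rule set_eqI, rule iffI)
      fix p assume "p \<in> {p \<in> R. (p, (snd p, snd p)) \<in> {pq \<in> fibprod R S. compose_map pq \<in> W}}"
      then have "p \<in> R" "compose_map (p, (snd p, snd p)) \<in> W" by auto
      then show "p \<in> W \<inter> R" using cm[of p] by (metis IntI)
    next
      fix p assume p: "p \<in> W \<inter> R"
      then have "(p, (snd p, snd p)) \<in> fibprod R S" using fb by blast
      moreover have "compose_map (p, (snd p, snd p)) \<in> W" using p cm[of p] by (metis IntD1)
      ultimately show "p \<in> {p \<in> R. (p, (snd p, snd p)) \<in> {pq \<in> fibprod R S. compose_map pq \<in> W}}"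
        using p by blast
    qed
qed

lemma preimg_S:
  fixes R S W :: "('a \<times> 'a) set"
  assumes fb: "\<And>p::'a\<times>'a. p \<in> S \<Longrightarrow> ((fst p, fst p), p) \<in> fibprod R S"
  shows "{p \<in> S. ((fst p, fst p), p) \<in> {pq \<in> fibprod R S. compose_map pq \<in> W}} = W \<inter> S"
proof -
  have cm: "\<And>p::'a\<times>'a. compose_map ((fst p, fst p), p) = p" by (simp add: compose_map_def)
  show ?thesis
    proof (rule set_eqI, rule iffI)
      fix p assume "p \<in> {p \<in> S. ((fst p, fst p), p) \<in> {pq \<in> fibprod R S. compose_map pq \<in> W}}"
      then have "p \<in> S" "compose_map ((fst p, fst p), p) \<in> W" by auto
      then show "p \<in> W \<inter> S" using cm[of p] by (metis IntI)
    next
      fix p assume p: "p \<in> W \<inter> S"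
      then have "((fst p, fst p), p) \<in> fibprod R S" using fb by blast
      moreover have "compose_map ((fst p, fst p), p) \<in> W" using p cm[of p] by (metis IntD1)
      ultimately show "p \<in> {p \<in> S. ((fst p, fst p), p) \<in> {pq \<in> fibprod R S. compose_map pq \<in> W}}"
        using p by blast
    qed
qed

context
  fixes X :: "'a topology" and R S :: "('a \<times> 'a) set" and TR TS :: "('a \<times> 'a) topology"
  assumes eR: "etale_eqrel X R TR" and eS: "etale_eqrel X S TS" and RS: "R \<inter> S = diag X"
begin

lemma R_open_join:
  assumes V: "V \<subseteq> R" "openin TR V" and J: "R \<subseteq> join_rel X R S"
  shows "openin (join_top X R TR S TS) V"
  unfolding join_open_iff
proof
  show "V \<subseteq> join_rel X R S" using V J by blast
  have tsp: "topspace (fibprod_top TR TS) = fibprod R S"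
    using etale_sub(2)[OF eR] etale_sub(2)[OF eS] by (rule fibtop_space)
  have eq: "{pq \<in> topspace (fibprod_top TR TS). compose_map pq \<in> V} = (V \<times> diag X) \<inter> fibprod R S"
  proof (rule set_eqI, rule iffI)
    fix pq assume pq: "pq \<in> {pq \<in> topspace (fibprod_top TR TS). compose_map pq \<in> V}"
    obtain a b c d where pe: "pq = ((a,b),(c,d))" by (metis prod.collapse)
    have F: "pq \<in> fibprod R S" and C: "compose_map pq \<in> V" using pq tsp by auto
    have ab: "(a,b) \<in> R" and cd: "(c,d) \<in> S" and bc: "b = c" using F pe unfolding fibprod_def by auto
    have ad: "(a,d) \<in> V" using C pe unfolding compose_map_def by simp
    then have "(a,d) \<in> R" using V by blast
    then have "(b,d) \<in> R" using ab etale_sub(4,5)[OF eR] unfolding sym_def trans_def by blast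
    then have d: "(b,d) \<in> diag X" using cd bc RS by blast
    then have "d = b" unfolding diag_def by auto
    then have "(a,b) \<in> V" "(c,d) \<in> diag X" using ad d bc by auto
    then show "pq \<in> (V \<times> diag X) \<inter> fibprod R S" using F pe by simp
  next
    fix pq assume pq: "pq \<in> (V \<times> diag X) \<inter> fibprod R S"
    obtain a b c d where pe: "pq = ((a,b),(c,d))" by (metis prod.collapse)
    have "(a,b) \<in> V" "(c,d) \<in> diag X" "b = c" using pq pe unfolding fibprod_def by auto
    then have "compose_map pq \<in> V" using pe unfolding compose_map_def diag_def by auto
    then show "pq \<in> {pq \<in> topspace (fibprod_top TR TS). compose_map pq \<in> V}"
      using pq tsp by simp
  qed
  have "openin (prod_topology TR TS) (V \<times> diag X)"
    using V(2) etale_diag_open[OF eS] by (simp add: openin_prod_Times_iff)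
  then have "openin (subtopology (prod_topology TR TS) (fibprod R S)) ((V \<times> diag X) \<inter> fibprod R S)"
    by (rule openin_subtopology_Int)
  then show "openin (fibprod_top TR TS) {pq \<in> topspace (fibprod_top TR TS). compose_map pq \<in> V}"
    unfolding eq unfolding fibprod_top_def etale_sub(2)[OF eR] etale_sub(2)[OF eS] .
qed

lemma S_open_join:
  assumes V: "V \<subseteq> S" "openin TS V" and J: "S \<subseteq> join_rel X R S"
  shows "openin (join_top X R TR S TS) V"
  unfolding join_open_iff
proof
  show "V \<subseteq> join_rel X R S" using V J by blast
  have tsp: "topspace (fibprod_top TR TS) = fibprod R S"
    using etale_sub(2)[OF eR] etale_sub(2)[OF eS] by (rule fibtop_space)
  have eq: "{pq \<in> topspace (fibprod_top TR TS). compose_map pq \<in> V} = (diag X \<times> V) \<inter> fibprod R S"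
  proof (rule set_eqI, rule iffI)
    fix pq assume pq: "pq \<in> {pq \<in> topspace (fibprod_top TR TS). compose_map pq \<in> V}"
    obtain a b c d where pe: "pq = ((a,b),(c,d))" by (metis prod.collapse)
    have F: "pq \<in> fibprod R S" and C: "compose_map pq \<in> V" using pq tsp by auto
    have ab: "(a,b) \<in> R" and cd: "(c,d) \<in> S" and bc: "b = c" using F pe unfolding fibprod_def by auto
    have ad: "(a,d) \<in> V" using C pe unfolding compose_map_def by simp
    then have "(a,d) \<in> S" using V by blast
    then have "(a,c) \<in> S" using cd etale_sub(4,5)[OF eS] unfolding sym_def trans_def by blast
    then have d: "(a,b) \<in> diag X" using ab bc RS by blast
    then have "a = b" unfolding diag_def by auto
    then have "(c,d) \<in> V" "(a,b) \<in> diag X" using ad d bc by auto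
    then show "pq \<in> (diag X \<times> V) \<inter> fibprod R S" using F pe by simp
  next
    fix pq assume pq: "pq \<in> (diag X \<times> V) \<inter> fibprod R S"
    obtain a b c d where pe: "pq = ((a,b),(c,d))" by (metis prod.collapse)
    have "(c,d) \<in> V" "(a,b) \<in> diag X" "b = c" using pq pe unfolding fibprod_def by auto
    then have "compose_map pq \<in> V" using pe unfolding compose_map_def diag_def by auto
    then show "pq \<in> {pq \<in> topspace (fibprod_top TR TS). compose_map pq \<in> V}"
      using pq tsp by simp
  qed
  have "openin (prod_topology TR TS) (diag X \<times> V)"
    using V(2) etale_diag_open[OF eR] by (simp add: openin_prod_Times_iff)
  then have "openin (subtopology (prod_topology TR TS) (fibprod R S)) ((diag X \<times> V) \<inter> fibprod R S)"
    by (rule openin_subtopology_Int)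
  then show "openin (fibprod_top TR TS) {pq \<in> topspace (fibprod_top TR TS). compose_map pq \<in> V}"
    unfolding eq unfolding fibprod_top_def etale_sub(2)[OF eR] etale_sub(2)[OF eS] .
qed

lemma join_open_R:
  assumes W: "openin (join_top X R TR S TS) W"
  shows "openin TR (W \<inter> R)"
proof -
  let ?F = "fibprod_top TR TS"
  have tsp: "topspace ?F = fibprod R S"
    using etale_sub(2)[OF eR] etale_sub(2)[OF eS] by (rule fibtop_space)
  have Q: "openin ?F {pq \<in> topspace ?F. compose_map pq \<in> W}" using W join_open_iff by blast
  have c: "continuous_map TR ?F (\<lambda>p. (p, (snd p, snd p)))"
    unfolding fibprod_top_def continuous_map_in_subtopology
  proof
    have "continuous_map TR TS ((\<lambda>x. (x,x)) \<circ> snd)"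
      using continuous_map_compose[OF etale_snd_cont[OF eR] etale_delta_cont[OF eS]] .
    then show "continuous_map TR (prod_topology TR TS) (\<lambda>p. (p, snd p, snd p))"
      by (intro continuous_map_pairedI) (auto simp: o_def)
    show "(\<lambda>p. (p, snd p, snd p)) \<in> topspace TR \<rightarrow> fibprod (topspace TR) (topspace TS)"
      using etale_sub[OF eR] etale_sub[OF eS] unfolding fibprod_def by auto
  qed
  have eq2:  "{p \<in> topspace TR. (p, (snd p, snd p)) \<in> {pq \<in> topspace ?F. compose_map pq \<in> W}} = W \<inter> R"
  proof -
    have fb: "\<And>p. p \<in> R \<Longrightarrow> (p, (snd p, snd p)) \<in> fibprod R S"
    proof -
      fix p assume p: "p \<in> R"
      then have "snd p \<in> topspace X" using etale_sub(1)[OF eR] by (metis mem_Sigma_iff prod.collapse subsetD)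
      then have "(snd p, snd p) \<in> S" using etale_sub(3)[OF eS] by blast
      then show "(p, (snd p, snd p)) \<in> fibprod R S"
        using p unfolding fibprod_def by simp
    qed
    show ?thesis unfolding tsp etale_sub(2)[OF eR] by (rule preimg_R[OF fb])
  qed
  show ?thesis
    using openin_continuous_map_preimage[OF c Q] unfolding eq2 .
qed

lemma join_open_S:
  assumes W: "openin (join_top X R TR S TS) W"
  shows "openin TS (W \<inter> S)"
proof -
  let ?F = "fibprod_top TR TS"
  have tsp: "topspace ?F = fibprod R S"
    using etale_sub(2)[OF eR] etale_sub(2)[OF eS] by (rule fibtop_space)
  have Q: "openin ?F {pq \<in> topspace ?F. compose_map pq \<in> W}" using W join_open_iff by blast
  have c: "continuous_map TS ?F (\<lambda>p. ((fst p, fst p), p))"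
    unfolding fibprod_top_def continuous_map_in_subtopology
  proof
    have "continuous_map TS TR ((\<lambda>x. (x,x)) \<circ> fst)"
      using continuous_map_compose[OF etale_fst_cont[OF eS] etale_delta_cont[OF eR]] .
    then show "continuous_map TS (prod_topology TR TS) (\<lambda>p. ((fst p, fst p), p))"
      by (intro continuous_map_pairedI) (auto simp: o_def)
    show "(\<lambda>p. ((fst p, fst p), p)) \<in> topspace TS \<rightarrow> fibprod (topspace TR) (topspace TS)"
      using etale_sub[OF eR] etale_sub[OF eS] unfolding fibprod_def by auto
  qed
  have eq2:  "{p \<in> topspace TS. ((fst p, fst p), p) \<in> {pq \<in> topspace ?F. compose_map pq \<in> W}} = W \<inter> S"
  proof -
    have fb: "\<And>p. p \<in> S \<Longrightarrow> ((fst p, fst p), p) \<in> fibprod R S"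
    proof -
      fix p assume p: "p \<in> S"
      then have "fst p \<in> topspace X" using etale_sub(1)[OF eS] by (metis mem_Sigma_iff prod.collapse subsetD)
      then have "(fst p, fst p) \<in> R" using etale_sub(3)[OF eR] by blast
      then show "((fst p, fst p), p) \<in> fibprod R S"
        using p unfolding fibprod_def by simp
    qed
    show ?thesis unfolding tsp etale_sub(2)[OF eS] by (rule preimg_S[OF fb])
  qed
  show ?thesis
    using openin_continuous_map_preimage[OF c Q] unfolding eq2 .
qed

end

lemma RS_comm:
  assumes tr: "transverse X R TR S TS" and tR: "topspace TR = R" and tS: "topspace TS = S"
  shows "R O S = S O R"
proof -
  obtain h where h: "homeomorphic_map (fibprod_top TR TS) (fibprod_top TS TR) h"
    and hp: "\<forall>pq \<in> fibprod R S. fst (fst (h pq)) = fst (fst pq) \<and> snd (snd (h pq)) = snd (snd pq)"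
    using tr unfolding transverse_def by blast
  have im: "h ` fibprod R S = fibprod S R"
    using homeomorphic_imp_surjective_map[OF h] fibtop_space[OF tR tS] fibtop_space[OF tS tR] by simp
  show ?thesis
  proof
    show "R O S \<subseteq> S O R"
    proof (rule subrelI)
      fix x z assume "(x,z) \<in> R O S"
      then obtain y where xy: "(x,y) \<in> R" "(y,z) \<in> S" by blast
      then have pq: "((x,y),(y,z)) \<in> fibprod R S" unfolding fibprod_def by simp
      then have q: "h ((x,y),(y,z)) \<in> fibprod S R" using im by blast
      obtain a b c d where e: "h ((x,y),(y,z)) = ((a,b),(c,d))" by (metis prod.collapse)
      have hh: "fst (fst (h ((x,y),(y,z)))) = fst (fst ((x,y),(y,z))) \<and> snd (snd (h ((x,y),(y,z)))) = snd (snd ((x,y),(y,z)))"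
        using hp pq by blast
      have "a = x" "d = z" using hh e by simp_all
      moreover have "(a,b) \<in> S" "(c,d) \<in> R" "b = c" using q e unfolding fibprod_def by auto
      ultimately show "(x,z) \<in> S O R" by blast
    qed
    show "S O R \<subseteq> R O S"
    proof (rule subrelI)
      fix x z assume "(x,z) \<in> S O R"
      then obtain y where xy: "(x,y) \<in> S" "(y,z) \<in> R" by blast
      then have "((x,y),(y,z)) \<in> fibprod S R" unfolding fibprod_def by simp
      then obtain pq where pq: "pq \<in> fibprod R S" "h pq = ((x,y),(y,z))" using im by (metis imageE)
      obtain a b c d where e: "pq = ((a,b),(c,d))" by (metis prod.collapse)
      have hh: "fst (fst (h pq)) = fst (fst pq) \<and> snd (snd (h pq)) = snd (snd pq)"
        using hp pq(1) by blast
      have "x = fst (fst pq) \<and> z = snd (snd pq)" using hh pq(2) by simp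
      then have "a = x" "d = z" using e by simp_all
      moreover have "(a,b) \<in> R" "(c,d) \<in> S" "b = c" using pq e unfolding fibprod_def by auto
      ultimately show "(x,z) \<in> R O S" by blast
    qed
  qed
qed

lemma join_eq:
  assumes eR: "etale_eqrel X R TR" and eS: "etale_eqrel X S TS" and comm: "R O S = S O R"
  shows "join_rel X R S = R O S"
proof
  have R1: "R \<subseteq> topspace X \<times> topspace X" "sym R" "trans R"
    and S1: "S \<subseteq> topspace X \<times> topspace X" "sym S" "trans S"
    using etale_sub[OF eR] etale_sub[OF eS] by auto
  have eq: "equiv (topspace X) (R O S)"
  proof (rule equivI)
    show "R O S \<subseteq> topspace X \<times> topspace X" using R1 S1 by blast
    show "refl_on (topspace X) (R O S)"
    proof (rule refl_onI)
      fix x assume "x \<in> topspace X"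
      then show "(x,x) \<in> R O S" using etale_sub(3)[OF eR] etale_sub(3)[OF eS] by blast
    qed
    show "sym (R O S)"
    proof (rule symI)
      fix x z assume "(x,z) \<in> R O S"
      then have "(z,x) \<in> S O R" using R1(2) S1(2) unfolding sym_def by blast
      then show "(z,x) \<in> R O S" using comm by simp
    qed
    show "trans (R O S)"
    proof (rule transI)
      fix x y z assume "(x,y) \<in> R O S" "(y,z) \<in> R O S"
      then obtain a b where ab: "(x,a) \<in> R" "(a,y) \<in> S" "(y,b) \<in> R" "(b,z) \<in> S" by blast
      then have "(a,b) \<in> S O R" by blast
      then have "(a,b) \<in> R O S" using comm by simp
      then obtain c where "(a,c) \<in> R" "(c,b) \<in> S" by blast
      then have "(x,c) \<in> R" "(c,z) \<in> S" using ab R1(3) S1(3) unfolding trans_def by blast+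
      then show "(x,z) \<in> R O S" by blast
    qed
  qed
  have sub: "R \<union> S \<subseteq> R O S"
  proof
    fix p assume "p \<in> R \<union> S"
    then obtain x y where p: "p = (x,y)" "(x,y) \<in> R \<union> S" by (metis prod.collapse)
    then have "x \<in> topspace X" "y \<in> topspace X" using R1(1) S1(1) by auto
    then have "(x,x) \<in> R" "(y,y) \<in> S" using etale_sub(3)[OF eR] etale_sub(3)[OF eS] by auto
    then show "p \<in> R O S" using p by blast
  qed
  show "join_rel X R S \<subseteq> R O S" unfolding join_rel_def using eq sub by blast
  show "R O S \<subseteq> join_rel X R S" unfolding join_rel_def
  proof
    fix p assume p: "p \<in> R O S"
    show "p \<in> \<Inter>{E. equiv (topspace X) E \<and> R \<union> S \<subseteq> E}"
    proof
      fix E assume E: "E \<in> {E. equiv (topspace X) E \<and> R \<union> S \<subseteq> E}"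
      then have "trans E" "R \<subseteq> E" "S \<subseteq> E" unfolding equiv_def by auto
      then show "p \<in> E" using p unfolding trans_def by blast
    qed
  qed
qed

lemma card_eq_inj:
  assumes "inj_on f A" "f ` A \<subseteq> B" "inj_on g B" "g ` B \<subseteq> A"
  shows "card A = card B"
proof (cases "finite A")
  case True
  then have "finite B" using assms(3,4) by (meson finite_imageD finite_subset)
  then show ?thesis using True card_inj_on_le assms by (meson le_antisym)
next
  case False
  then have "infinite B" using assms(1,2) by (meson finite_imageD finite_subset)
  then show ?thesis using False by simp
qed

lemma mid_unique:
  assumes "sym R" "trans R" "sym S" "trans S" "R \<inter> S \<subseteq> Id"
    and "(x,y) \<in> R" "(y,z) \<in> S" "(x,y') \<in> R" "(y',z) \<in> S"
  shows "y = y'"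
proof -
  have "(y,x) \<in> R" using assms(1,6) unfolding sym_def by blast
  then have "(y,y') \<in> R" using assms(2,8) unfolding trans_def by blast
  moreover have "(z,y') \<in> S" using assms(3,9) unfolding sym_def by blast
  then have "(y,y') \<in> S" using assms(4,7) unfolding trans_def by blast
  ultimately show ?thesis using assms(5) by blast
qed

lemma inj_class:
  assumes tr: "transverse X R TR S TS" and tR: "topspace TR = R" and tS: "topspace TS = S"
    and R1: "sym R" "trans R" and S1: "sym S" "trans S" and RS: "R \<inter> S \<subseteq> Id"
    and xy: "(x,y) \<in> R"
  shows "\<exists>f. inj_on f (S `` {y}) \<and> f ` (S `` {y}) \<subseteq> S `` {x}"
proof -
  obtain h where h: "homeomorphic_map (fibprod_top TR TS) (fibprod_top TS TR) h"
    and hp: "\<forall>pq \<in> fibprod R S. fst (fst (h pq)) = fst (fst pq) \<and> snd (snd (h pq)) = snd (snd pq)"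
    using tr unfolding transverse_def by blast
  have im: "h ` fibprod R S = fibprod S R"
    using homeomorphic_imp_surjective_map[OF h] fibtop_space[OF tR tS] fibtop_space[OF tS tR] by simp
  define f where "f z = snd (fst (h ((x,y),(y,z))))" for z
  have key: "(x, f z) \<in> S \<and> (f z, z) \<in> R" if z: "(y,z) \<in> S" for z
  proof -
    have pq: "((x,y),(y,z)) \<in> fibprod R S" using xy z unfolding fibprod_def by simp
    then have q: "h ((x,y),(y,z)) \<in> fibprod S R" using im by blast
    obtain a b c d where e: "h ((x,y),(y,z)) = ((a,b),(c,d))" by (metis prod.collapse)
      have hh: "fst (fst (h ((x,y),(y,z)))) = fst (fst ((x,y),(y,z))) \<and> snd (snd (h ((x,y),(y,z)))) = snd (snd ((x,y),(y,z)))"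
        using hp pq by blast
      have "a = x" "d = z" using hh e by simp_all
    moreover have "(a,b) \<in> S" "(c,d) \<in> R" "b = c" using q e unfolding fibprod_def by auto
    moreover have "f z = b" unfolding f_def e by simp
    ultimately show ?thesis by simp
  qed
  have "inj_on f (S `` {y})"
  proof (rule inj_onI)
    fix z1 z2 assume z: "z1 \<in> S `` {y}" "z2 \<in> S `` {y}" and fe: "f z1 = f z2"
    have k1: "(f z1, z1) \<in> R" using key z(1) by blast
    have "(f z2, z2) \<in> R" using key z(2) by blast
    then have k2: "(f z1, z2) \<in> R" using fe by simp
    have "(z1, f z1) \<in> R" using k1 R1(1) unfolding sym_def by blast
    then have r: "(z1, z2) \<in> R" using k2 R1(2) unfolding trans_def by blast
    have "(z1, y) \<in> S" using z S1(1) unfolding sym_def by blast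
    then have "(z1, z2) \<in> S" using z S1(2) unfolding trans_def by blast
    then show "z1 = z2" using r RS by blast
  qed
  moreover have "f ` (S `` {y}) \<subseteq> S `` {x}" using key by blast
  ultimately show ?thesis by blast
qed


lemma piece_in:
  assumes fine: "\<forall>U\<in>P. U \<subseteq> D \<or> U \<subseteq> R - D \<or> U \<subseteq> S - D \<or> U \<subseteq> E - (R \<union> S)"
    and RS: "R \<inter> S = D" and A: "A \<in> P" "p \<in> A"
  shows "p \<in> R \<Longrightarrow> A \<subseteq> R" and "p \<in> S \<Longrightarrow> A \<subseteq> S"
  using fine A RS by blast+

lemma disj_eq:
  assumes "\<forall>U\<in>P. \<forall>V\<in>P. U \<noteq> V \<longrightarrow> U \<inter> V = {}" "A \<in> P" "B \<in> P" "p \<in> A" "p \<in> B"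
  shows "A = B"
proof (rule ccontr)
  assume "A \<noteq> B"
  then have "A \<inter> B = {}" using assms(1-3) by blast
  then show False using assms(4,5) by blast
qed

lemma factor_unique:
  assumes disj: "\<forall>U\<in>P. \<forall>V\<in>P. U \<noteq> V \<longrightarrow> U \<inter> V = {}"
    and cov: "\<Union>P = E" and E: "E \<subseteq> R O S" "R \<union> S \<subseteq> E"
    and prod: "\<forall>U\<in>P. \<forall>V\<in>P. U O V = {} \<or> U O V \<in> P"
    and fine: "\<forall>U\<in>P. U \<subseteq> D \<or> U \<subseteq> R - D \<or> U \<subseteq> S - D \<or> U \<subseteq> E - (R \<union> S)"
    and RS: "R \<inter> S = D" "D \<subseteq> Id" and R1: "sym R" "trans R" and S1: "sym S" "trans S"
    and ne: "{} \<notin> P" and U: "U \<in> P"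
  shows "\<exists>!(A, B). A \<in> P \<and> B \<in> P \<and> A \<subseteq> R \<and> B \<subseteq> S \<and> U = A O B"
proof -
  have "U \<noteq> {}" using U ne by blast
  then obtain p where "p \<in> U" by blast
  then obtain x z where xz: "(x,z) \<in> U" by (metis prod.collapse)
  have "(x,z) \<in> R O S" using xz U cov E by blast
  then obtain y where y: "(x,y) \<in> R" "(y,z) \<in> S" by blast
  have "(x,y) \<in> \<Union>P" "(y,z) \<in> \<Union>P" using y cov E by blast+
  then obtain A B where A: "A \<in> P" "(x,y) \<in> A" and B: "B \<in> P" "(y,z) \<in> B" by blast
  have AR: "A \<subseteq> R" using piece_in(1)[OF fine RS(1) A y(1)] .
  have BS: "B \<subseteq> S" using piece_in(2)[OF fine RS(1) B y(2)] .
  have xAB: "(x,z) \<in> A O B" using A B by blast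
  then have "A O B \<in> P" using prod A B by blast
  then have UAB: "U = A O B" using disj_eq[OF disj U _ xz xAB] by blast
  have RSI: "R \<inter> S \<subseteq> Id" using RS by blast
  show ?thesis
  proof (rule ex1I[where a="(A,B)"])
    show "case (A, B) of (A, B) \<Rightarrow> A \<in> P \<and> B \<in> P \<and> A \<subseteq> R \<and> B \<subseteq> S \<and> U = A O B"
      using A B AR BS UAB by simp
  next
    fix q assume q: "case q of (A, B) \<Rightarrow> A \<in> P \<and> B \<in> P \<and> A \<subseteq> R \<and> B \<subseteq> S \<and> U = A O B"
    obtain A' B' where qe: "q = (A',B')" by (cases q)
    with q have A': "A' \<in> P" "B' \<in> P" "A' \<subseteq> R" "B' \<subseteq> S" "U = A' O B'" by auto
    then obtain y' where y': "(x,y') \<in> A'" "(y',z) \<in> B'" using xz by blast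
    have "y' = y"
      using mid_unique[OF R1 S1 RSI, of x y' z y] y' A'(3,4) y by blast
    then have "A' = A" "B' = B" using disj_eq[OF disj A'(1) A(1)] disj_eq[OF disj A'(2) B(1)] y' A B by blast+
    then show "q = (A, B)" using qe by simp
  qed
qed

lemma ex1_swap:
  assumes "\<exists>!(a, b). Pa a \<and> Pb b \<and> Qa a \<and> Qb b \<and> Z a b"
  shows "\<exists>!(a, b). Pa a \<and> Pb b \<and> Qb b \<and> Qa a \<and> Z a b"
proof -
  have "(\<lambda>(a, b). Pa a \<and> Pb b \<and> Qb b \<and> Qa a \<and> Z a b) = (\<lambda>(a, b). Pa a \<and> Pb b \<and> Qa a \<and> Qb b \<and> Z a b)"
    by (auto simp: fun_eq_iff)
  then show ?thesis using assms by simp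
qed

lemma gp_D:
  assumes G: "groupoid_partition X E J P"
  shows fin: "finite P"
    and cov: "\<Union>P = E"
    and ne: "{} \<notin> P"
    and disj: "\<forall>U \<in> P. \<forall>V \<in> P. U \<noteq> V \<longrightarrow> U \<inter> V = {}"
    and oc: "\<forall>U \<in> P. openin J U \<and> closedin J U"
    and dg: "\<forall>U \<in> P. U \<subseteq> diag X \<or> U \<subseteq> E - diag X"
    and hm: "\<forall>U \<in> P. homeomorphic_map (subtopology J U) (subtopology X (fst ` U)) fst \<and>
               homeomorphic_map (subtopology J U) (subtopology X (snd ` U)) snd"
    and fs: "\<forall>U \<in> P. U \<subseteq> E - diag X \<longrightarrow> fst ` U \<inter> snd ` U = {}"
    and pr: "\<forall>U \<in> P. \<forall>V \<in> P. U O V = {} \<or> U O V \<in> P"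
    and iv: "\<forall>U \<in> P. U\<inverse> \<in> P"
proof -
  note G' = G[unfolded groupoid_partition_def]
  show fin: "finite P" by (rule G'[THEN conjunct1])
  show cov: "\<Union>P = E" by (rule G'[THEN conjunct2, THEN conjunct1])
  show ne: "{} \<notin> P" by (rule G'[THEN conjunct2, THEN conjunct2, THEN conjunct1])
  show disj: "\<forall>U \<in> P. \<forall>V \<in> P. U \<noteq> V \<longrightarrow> U \<inter> V = {}" by (rule G'[THEN conjunct2, THEN conjunct2, THEN conjunct2, THEN conjunct1])
  show oc: "\<forall>U \<in> P. openin J U \<and> closedin J U" by (rule G'[THEN conjunct2, THEN conjunct2, THEN conjunct2, THEN conjunct2, THEN conjunct1])
  show dg: "\<forall>U \<in> P. U \<subseteq> diag X \<or> U \<subseteq> E - diag X" by (rule G'[THEN conjunct2, THEN conjunct2, THEN conjunct2, THEN conjunct2, THEN conjunct2, THEN conjunct1])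
  show hm: "\<forall>U \<in> P. homeomorphic_map (subtopology J U) (subtopology X (fst ` U)) fst \<and>
               homeomorphic_map (subtopology J U) (subtopology X (snd ` U)) snd" by (rule G'[THEN conjunct2, THEN conjunct2, THEN conjunct2, THEN conjunct2, THEN conjunct2, THEN conjunct2, THEN conjunct1])
  show fs: "\<forall>U \<in> P. U \<subseteq> E - diag X \<longrightarrow> fst ` U \<inter> snd ` U = {}" by (rule G'[THEN conjunct2, THEN conjunct2, THEN conjunct2, THEN conjunct2, THEN conjunct2, THEN conjunct2, THEN conjunct2, THEN conjunct1])
  show pr: "\<forall>U \<in> P. \<forall>V \<in> P. U O V = {} \<or> U O V \<in> P" by (rule G'[THEN conjunct2, THEN conjunct2, THEN conjunct2, THEN conjunct2, THEN conjunct2, THEN conjunct2, THEN conjunct2, THEN conjunct2, THEN conjunct1])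
  show iv: "\<forall>U \<in> P. U\<inverse> \<in> P" by (rule G'[THEN conjunct2, THEN conjunct2, THEN conjunct2, THEN conjunct2, THEN conjunct2, THEN conjunct2, THEN conjunct2, THEN conjunct2, THEN conjunct2])
qed

lemma gp_restrict:
  assumes gp: "groupoid_partition X E J P"
    and RE: "Rr \<subseteq> E" and Rs: "sym Rr" "trans Rr" and tT: "topspace T = Rr"
    and piece: "\<And>A p. A \<in> P \<Longrightarrow> p \<in> A \<Longrightarrow> p \<in> Rr \<Longrightarrow> A \<subseteq> Rr"
    and op: "\<And>A. openin J A \<Longrightarrow> openin T (A \<inter> Rr)"
    and sub: "\<And>A. A \<subseteq> Rr \<Longrightarrow> subtopology T A = subtopology J A"
  shows "groupoid_partition X Rr T {U \<in> P. U \<subseteq> Rr}"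
proof -
  note gpd = gp_D[OF gp]
  note fin = gpd(1) and cov = gpd(2) and ne = gpd(3) and disj = gpd(4) and oc = gpd(5)
    and dg = gpd(6) and hm = gpd(7) and fs = gpd(8) and pr = gpd(9) and iv = gpd(10)
  have RJ: "Rr \<subseteq> topspace J"
  proof
    fix p assume "p \<in> Rr"
    then obtain A where "A \<in> P" "p \<in> A" using RE cov by blast
    then show "p \<in> topspace J" using oc openin_subset by blast
  qed
  let ?Q = "{U \<in> P. U \<subseteq> Rr}"
  show ?thesis unfolding groupoid_partition_def
  proof (intro conjI)
    show "finite ?Q" using fin by simp
    show "\<Union>?Q = Rr"
    proof
      show "\<Union>?Q \<subseteq> Rr" by blast
      show "Rr \<subseteq> \<Union>?Q"
      proof
        fix p assume p: "p \<in> Rr"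
        then obtain A where A: "A \<in> P" "p \<in> A" using RE cov by blast
        then have "A \<subseteq> Rr" using piece p by blast
        then show "p \<in> \<Union>?Q" using A by blast
      qed
    qed
    show "{} \<notin> ?Q" using ne by blast
    show "\<forall>U \<in> ?Q. \<forall>V \<in> ?Q. U \<noteq> V \<longrightarrow> U \<inter> V = {}" using disj by blast
    show "\<forall>U \<in> ?Q. openin T U \<and> closedin T U"
    proof
      fix A assume A: "A \<in> ?Q"
      then have oA: "openin J A" and cA: "closedin J A" and AR: "A \<subseteq> Rr" using oc by blast+
      have "openin T (A \<inter> Rr)" using op oA by blast
      then have o: "openin T A" using AR by (simp add: Int_absorb2)
      have "openin J (topspace J - A)" using cA unfolding closedin_def by blast
      then have "openin T ((topspace J - A) \<inter> Rr)" using op by blast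
      moreover have "(topspace J - A) \<inter> Rr = topspace T - A" using RJ tT by blast
      ultimately have "openin T (topspace T - A)" by simp
      then have "closedin T A" unfolding closedin_def using AR tT by blast
      then show "openin T A \<and> closedin T A" using o by blast
    qed
    show "\<forall>U \<in> ?Q. U \<subseteq> diag X \<or> U \<subseteq> Rr - diag X" using dg by blast
    show "\<forall>U \<in> ?Q. homeomorphic_map (subtopology T U) (subtopology X (fst ` U)) fst \<and>
               homeomorphic_map (subtopology T U) (subtopology X (snd ` U)) snd"
    proof
      fix A assume A: "A \<in> ?Q"
      then have "subtopology T A = subtopology J A" using sub by blast
      then show "homeomorphic_map (subtopology T A) (subtopology X (fst ` A)) fst \<and>
               homeomorphic_map (subtopology T A) (subtopology X (snd ` A)) snd"
        using hm A by simp
    qed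
    show "\<forall>U \<in> ?Q. U \<subseteq> Rr - diag X \<longrightarrow> fst ` U \<inter> snd ` U = {}"
      using fs RE by blast
    show "\<forall>U \<in> ?Q. \<forall>V \<in> ?Q. U O V = {} \<or> U O V \<in> ?Q"
    proof (intro ballI)
      fix A B assume A: "A \<in> ?Q" and B: "B \<in> ?Q"
      have "A O B \<subseteq> Rr O Rr" using A B by blast
      also have "\<dots> \<subseteq> Rr" using Rs(2) by (rule trans_O_subset)
      finally have "A O B \<subseteq> Rr" .
      then show "A O B = {} \<or> A O B \<in> ?Q" using pr A B by blast
    qed
    show "\<forall>U \<in> ?Q. U\<inverse> \<in> ?Q"
    proof
      fix A assume A: "A \<in> ?Q"
      have "A\<inverse> \<subseteq> Rr\<inverse>" using A by blast
      also have "Rr\<inverse> = Rr" using Rs(1) by (simp add: sym_conv_converse_eq)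
      finally show "A\<inverse> \<in> ?Q" using iv A by blast
    qed
  qed
qed

context
  fixes X :: "'a topology" and R S :: "('a \<times> 'a) set" and TR TS :: "('a \<times> 'a) topology"
  assumes eR: "etale_eqrel X R TR" and eS: "etale_eqrel X S TS" and RS: "R \<inter> S = diag X"
begin

lemma subtop_R:
  assumes A: "A \<subseteq> R" and J: "R \<subseteq> join_rel X R S"
  shows "subtopology TR A = subtopology (join_top X R TR S TS) A"
  unfolding topology_eq openin_subtopology
proof (intro allI iffI)
  fix B assume "\<exists>T. openin TR T \<and> B = T \<inter> A"
  then obtain T where T: "openin TR T" "B = T \<inter> A" by blast
  have "T \<subseteq> R" using openin_subset[OF T(1)] etale_sub(2)[OF eR] by simp
  then have "openin (join_top X R TR S TS) T" using R_open_join[OF eR eS RS] T(1) J by blast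
  then show "\<exists>T. openin (join_top X R TR S TS) T \<and> B = T \<inter> A" using T(2) by blast
next
  fix B assume "\<exists>T. openin (join_top X R TR S TS) T \<and> B = T \<inter> A"
  then obtain T where T: "openin (join_top X R TR S TS) T" "B = T \<inter> A" by blast
  have "openin TR (T \<inter> R)" using join_open_R[OF eR eS RS T(1)] .
  moreover have "B = (T \<inter> R) \<inter> A" using T(2) A by blast
  ultimately show "\<exists>T. openin TR T \<and> B = T \<inter> A" by blast
qed

lemma subtop_S:
  assumes A: "A \<subseteq> S" and J: "S \<subseteq> join_rel X R S"
  shows "subtopology TS A = subtopology (join_top X R TR S TS) A"
  unfolding topology_eq openin_subtopology
proof (intro allI iffI)
  fix B assume "\<exists>T. openin TS T \<and> B = T \<inter> A"
  then obtain T where T: "openin TS T" "B = T \<inter> A" by blast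
  have "T \<subseteq> S" using openin_subset[OF T(1)] etale_sub(2)[OF eS] by simp
  then have "openin (join_top X R TR S TS) T" using S_open_join[OF eR eS RS] T(1) J by blast
  then show "\<exists>T. openin (join_top X R TR S TS) T \<and> B = T \<inter> A" using T(2) by blast
next
  fix B assume "\<exists>T. openin (join_top X R TR S TS) T \<and> B = T \<inter> A"
  then obtain T where T: "openin (join_top X R TR S TS) T" "B = T \<inter> A" by blast
  have "openin TS (T \<inter> S)" using join_open_S[OF eR eS RS T(1)] .
  moreover have "B = (T \<inter> S) \<inter> A" using T(2) A by blast
  ultimately show "\<exists>T. openin TS T \<and> B = T \<inter> A" by blast
qed

end

theorem lemma3p4:
  fixes X :: "'a topology"
    and R S :: "('a \<times> 'a) set"
    and TR TS :: "('a \<times> 'a) topology"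
  assumes "compact_space X" and "metrizable_space X" and "X dim_le 0"
    and "CEER X R TR" and "CEER X S TS"
    and "transverse X R TR S TS"
  shows "(\<forall>x y. (x, y) \<in> R \<longrightarrow> card (S `` {x}) = card (S `` {y}))
    \<and> (\<forall>P. groupoid_partition X (join_rel X R S) (join_top X R TR S TS) P
          \<and> (\<forall>U \<in> P. U \<subseteq> diag X \<or> U \<subseteq> R - diag X \<or> U \<subseteq> S - diag X
                      \<or> U \<subseteq> join_rel X R S - (R \<union> S))
        \<longrightarrow> (\<forall>U \<in> P.
               (\<exists>!(UR, US). UR \<in> P \<and> US \<in> P \<and> UR \<subseteq> R \<and> US \<subseteq> S \<and> U = UR O US)
             \<and> (\<exists>!(VS, VR). VS \<in> P \<and> VR \<in> P \<and> VR \<subseteq> R \<and> VS \<subseteq> S \<and> U = VS O VR))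
          \<and> groupoid_partition X R TR {U \<in> P. U \<subseteq> R}
          \<and> groupoid_partition X S TS {U \<in> P. U \<subseteq> S})"
proof -
  have eR: "etale_eqrel X R TR" and eS: "etale_eqrel X S TS"
    using assms(4,5) unfolding CEER_def by auto
  have tr: "transverse X R TR S TS" by (rule assms(6))
  have tR: "topspace TR = R" and tS: "topspace TS = S"
    using etale_sub(2)[OF eR] etale_sub(2)[OF eS] by auto
  have RS: "R \<inter> S = diag X" using tr unfolding transverse_def by blast
  have DId: "diag X \<subseteq> Id" unfolding diag_def by auto
  have RSI: "R \<inter> S \<subseteq> Id" using RS DId by blast
  have R1: "sym R" "trans R" and S1: "sym S" "trans S"
    using etale_sub(4,5)[OF eR] etale_sub(4,5)[OF eS] by auto
  have comm: "R O S = S O R" by (rule RS_comm[OF tr tR tS])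
  have J: "join_rel X R S = R O S" by (rule join_eq[OF eR eS comm])
  have RSJ: "R \<union> S \<subseteq> join_rel X R S" unfolding join_rel_def by blast
  have part1: "\<forall>x y. (x, y) \<in> R \<longrightarrow> card (S `` {x}) = card (S `` {y})"
  proof (intro allI impI)
    fix x y assume xy: "(x, y) \<in> R"
    then have yx: "(y, x) \<in> R" using R1(1) unfolding sym_def by blast
    obtain f where f: "inj_on f (S `` {y})" "f ` (S `` {y}) \<subseteq> S `` {x}"
      using inj_class[OF tr tR tS R1 S1 RSI xy] by blast
    obtain g where g: "inj_on g (S `` {x})" "g ` (S `` {x}) \<subseteq> S `` {y}"
      using inj_class[OF tr tR tS R1 S1 RSI yx] by blast
    show "card (S `` {x}) = card (S `` {y})" by (rule card_eq_inj[OF g f])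
  qed
  have part2: "\<forall>P. groupoid_partition X (join_rel X R S) (join_top X R TR S TS) P
          \<and> (\<forall>U \<in> P. U \<subseteq> diag X \<or> U \<subseteq> R - diag X \<or> U \<subseteq> S - diag X
                      \<or> U \<subseteq> join_rel X R S - (R \<union> S))
        \<longrightarrow> (\<forall>U \<in> P.
               (\<exists>!(UR, US). UR \<in> P \<and> US \<in> P \<and> UR \<subseteq> R \<and> US \<subseteq> S \<and> U = UR O US)
             \<and> (\<exists>!(VS, VR). VS \<in> P \<and> VR \<in> P \<and> VR \<subseteq> R \<and> VS \<subseteq> S \<and> U = VS O VR))
          \<and> groupoid_partition X R TR {U \<in> P. U \<subseteq> R}
          \<and> groupoid_partition X S TS {U \<in> P. U \<subseteq> S}"
  proof (intro allI impI)
    fix P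
    assume H: "groupoid_partition X (join_rel X R S) (join_top X R TR S TS) P
          \<and> (\<forall>U \<in> P. U \<subseteq> diag X \<or> U \<subseteq> R - diag X \<or> U \<subseteq> S - diag X
                      \<or> U \<subseteq> join_rel X R S - (R \<union> S))"
    have gp: "groupoid_partition X (join_rel X R S) (join_top X R TR S TS) P"
      using H by (rule conjunct1)
    have fine: "\<forall>U \<in> P. U \<subseteq> diag X \<or> U \<subseteq> R - diag X \<or> U \<subseteq> S - diag X
                      \<or> U \<subseteq> join_rel X R S - (R \<union> S)" using H by (rule conjunct2)
    note cov = gp_D(2)[OF gp] and ne = gp_D(3)[OF gp] and disj = gp_D(4)[OF gp] and pr = gp_D(9)[OF gp]
    have fine': "\<forall>U \<in> P. U \<subseteq> diag X \<or> U \<subseteq> S - diag X \<or> U \<subseteq> R - diag X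
                      \<or> U \<subseteq> join_rel X R S - (S \<union> R)" using fine by blast
    have E1: "join_rel X R S \<subseteq> R O S" using J by simp
    have E2: "join_rel X R S \<subseteq> S O R" using J comm by simp
    have RS': "S \<inter> R = diag X" using RS by blast
    have RSJ': "S \<union> R \<subseteq> join_rel X R S" using RSJ by blast
    have A: "\<forall>U \<in> P.
               (\<exists>!(UR, US). UR \<in> P \<and> US \<in> P \<and> UR \<subseteq> R \<and> US \<subseteq> S \<and> U = UR O US)
             \<and> (\<exists>!(VS, VR). VS \<in> P \<and> VR \<in> P \<and> VR \<subseteq> R \<and> VS \<subseteq> S \<and> U = VS O VR)"
    proof
      fix U assume U: "U \<in> P"
      show "(\<exists>!(UR, US). UR \<in> P \<and> US \<in> P \<and> UR \<subseteq> R \<and> US \<subseteq> S \<and> U = UR O US)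
             \<and> (\<exists>!(VS, VR). VS \<in> P \<and> VR \<in> P \<and> VR \<subseteq> R \<and> VS \<subseteq> S \<and> U = VS O VR)"
      proof
        show "\<exists>!(UR, US). UR \<in> P \<and> US \<in> P \<and> UR \<subseteq> R \<and> US \<subseteq> S \<and> U = UR O US"
          by (rule factor_unique[OF disj cov E1 RSJ pr fine RS DId R1 S1 ne U])
        have "\<exists>!(A, B). A \<in> P \<and> B \<in> P \<and> A \<subseteq> S \<and> B \<subseteq> R \<and> U = A O B"
          by (rule factor_unique[OF disj cov E2 RSJ' pr fine' RS' DId S1 R1 ne U])
        then show "\<exists>!(VS, VR). VS \<in> P \<and> VR \<in> P \<and> VR \<subseteq> R \<and> VS \<subseteq> S \<and> U = VS O VR"
          by (rule ex1_swap)
      qed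
    qed
    have gR: "groupoid_partition X R TR {U \<in> P. U \<subseteq> R}"
    proof (rule gp_restrict[OF gp _ R1 tR])
      show "R \<subseteq> join_rel X R S" using RSJ by blast
      show "\<And>A p. A \<in> P \<Longrightarrow> p \<in> A \<Longrightarrow> p \<in> R \<Longrightarrow> A \<subseteq> R"
        using piece_in(1)[OF fine RS] by blast
      show "\<And>A. openin (join_top X R TR S TS) A \<Longrightarrow> openin TR (A \<inter> R)"
        by (rule join_open_R[OF eR eS RS])
      show "\<And>A. A \<subseteq> R \<Longrightarrow> subtopology TR A = subtopology (join_top X R TR S TS) A"
        using subtop_R[OF eR eS RS] RSJ by blast
    qed
    have gS: "groupoid_partition X S TS {U \<in> P. U \<subseteq> S}"
    proof (rule gp_restrict[OF gp _ S1 tS])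
      show "S \<subseteq> join_rel X R S" using RSJ by blast
      show "\<And>A p. A \<in> P \<Longrightarrow> p \<in> A \<Longrightarrow> p \<in> S \<Longrightarrow> A \<subseteq> S"
        using piece_in(2)[OF fine RS] by blast
      show "\<And>A. openin (join_top X R TR S TS) A \<Longrightarrow> openin TS (A \<inter> S)"
        by (rule join_open_S[OF eR eS RS])
      show "\<And>A. A \<subseteq> S \<Longrightarrow> subtopology TS A = subtopology (join_top X R TR S TS) A"
        using subtop_S[OF eR eS RS] RSJ by blast
    qed
    show "(\<forall>U \<in> P.
               (\<exists>!(UR, US). UR \<in> P \<and> US \<in> P \<and> UR \<subseteq> R \<and> US \<subseteq> S \<and> U = UR O US)
             \<and> (\<exists>!(VS, VR). VS \<in> P \<and> VR \<in> P \<and> VR \<subseteq> R \<and> VS \<subseteq> S \<and> U = VS O VR))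
          \<and> groupoid_partition X R TR {U \<in> P. U \<subseteq> R}
          \<and> groupoid_partition X S TS {U \<in> P. U \<subseteq> S}"
      using A gR gS by blast
  qed
  show ?thesis using part1 part2 by blast
qed

end
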